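(* Let $p$ be a prime and $S\subseteq\mathbb{F}_p\setminus\{0\}$ a symmetric set such that $G=\Gamma(\mathbb{F}_p,S)$ is self-complementary (isomorphic to its complement). Then $\Theta_{\mathrm{lin}}(G)=\sqrt p$.
   Context: For a symmetric set $S\subseteq\mathbb{F}_p\setminus\{0\}$ ($S=-S$), the Cayley graph $\Gamma(\mathbb{F}_p,S)$ has vertex set $\mathbb{F}_p$, with $u\sim v$ iff $u-v\in S$. $G^k$ is the $k$-fold strong product (distinct vertices adjacent iff in each coordinate they are equal or adjacent). $\alpha_{\mathrm{lin}}(G^k)$ is the largest size of an independent set of $G^k$ that is a linear subspace of $\mathbb{F}_p^k$, and $\Theta_{\mathrm{lin}}(G)=\sup_k\alpha_{\mathrm{lin}}(G^k)^{1/k}$. *)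

theory Defs
  imports Complex_Main "HOL-Computational_Algebra.Primes"
begin

text \<open>Elements of F_p are represented by integers in {0..<p}.
  A connection set S is a subset of {1..<p}; symmetric means S = -S mod p.\<close>

definition cayley_conn_set :: "nat \<Rightarrow> int set \<Rightarrow> bool" where
  "cayley_conn_set p S \<longleftrightarrow> S \<subseteq> {1..<int p} \<and> (\<forall>x\<in>S. (- x) mod int p \<in> S)"

definition cay_adj :: "nat \<Rightarrow> int set \<Rightarrow> int \<Rightarrow> int \<Rightarrow> bool" where
  "cay_adj p S u v \<longleftrightarrow> (u - v) mod int p \<in> S"

definition self_complementary :: "nat \<Rightarrow> int set \<Rightarrow> bool" where
  "self_complementary p S \<longleftrightarrow>
     (\<exists>f. bij_betw f {0..<int p} {0..<int p} \<and>
          (\<forall>u\<in>{0..<int p}. \<forall>v\<in>{0..<int p}. u \<noteq> v \<longrightarrow>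
              (cay_adj p S u v \<longleftrightarrow> (f u \<noteq> f v \<and> \<not> cay_adj p S (f u) (f v)))))"

definition Fvecs :: "nat \<Rightarrow> nat \<Rightarrow> (nat \<Rightarrow> int) set" where
  "Fvecs p k = {v. (\<forall>i<k. v i \<in> {0..<int p}) \<and> (\<forall>i\<ge>k. v i = 0)}"

definition lin_subspace :: "nat \<Rightarrow> nat \<Rightarrow> (nat \<Rightarrow> int) set \<Rightarrow> bool" where
  "lin_subspace p k V \<longleftrightarrow> V \<subseteq> Fvecs p k \<and> (\<lambda>i. 0) \<in> V \<and>
     (\<forall>u\<in>V. \<forall>v\<in>V. (\<lambda>i. (u i + v i) mod int p) \<in> V) \<and>
     (\<forall>c\<in>{0..<int p}. \<forall>u\<in>V. (\<lambda>i. (c * u i) mod int p) \<in> V)"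

definition strong_adj :: "nat \<Rightarrow> int set \<Rightarrow> nat \<Rightarrow> (nat \<Rightarrow> int) \<Rightarrow> (nat \<Rightarrow> int) \<Rightarrow> bool" where
  "strong_adj p S k u v \<longleftrightarrow> u \<noteq> v \<and> (\<forall>i<k. u i = v i \<or> cay_adj p S (u i) (v i))"

definition strong_indep :: "nat \<Rightarrow> int set \<Rightarrow> nat \<Rightarrow> (nat \<Rightarrow> int) set \<Rightarrow> bool" where
  "strong_indep p S k I \<longleftrightarrow> I \<subseteq> Fvecs p k \<and> (\<forall>u\<in>I. \<forall>v\<in>I. \<not> strong_adj p S k u v)"

definition alpha_lin :: "nat \<Rightarrow> int set \<Rightarrow> nat \<Rightarrow> nat" where
  "alpha_lin p S k = Max {card V | V. lin_subspace p k V \<and> strong_indep p S k V}"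

definition theta_lin :: "nat \<Rightarrow> int set \<Rightarrow> real" where
  "theta_lin p S = (SUP k\<in>{1..}. real (alpha_lin p S k) powr (1 / real k))"

end

theory Submission
  imports Defs "HOL-Number_Theory.Number_Theory" "HOL-Combinatorics.Permutations"
begin

inductive deg_lt :: "nat \<Rightarrow> ((nat \<Rightarrow> int) \<Rightarrow> int) \<Rightarrow> bool" where
  zero: "deg_lt n (\<lambda>x. 0)"
| const: "deg_lt (Suc n) (\<lambda>x. a)"
| var: "deg_lt (Suc (Suc n)) (\<lambda>x. x i)"
| add: "deg_lt n f \<Longrightarrow> deg_lt n g \<Longrightarrow> deg_lt n (\<lambda>x. f x + g x)"
| smul: "deg_lt n f \<Longrightarrow> deg_lt n (\<lambda>x. a * f x)"
| mul: "deg_lt (Suc m) f \<Longrightarrow> deg_lt (Suc n) g \<Longrightarrow> deg_lt (Suc (m + n)) (\<lambda>x. f x * g x)"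

lemma deg_lt_cong: "deg_lt n f \<Longrightarrow> (\<And>x. f x = g x) \<Longrightarrow> deg_lt n g"
proof -
  assume "deg_lt n f" "\<And>x. f x = g x"
  then have "f = g" by (simp add: fun_eq_iff)
  with \<open>deg_lt n f\<close> show ?thesis by simp
qed

lemma deg_lt_0: "deg_lt n f \<Longrightarrow> n = 0 \<Longrightarrow> f = (\<lambda>x. 0)"
  by (induction rule: deg_lt.induct) auto

lemma deg_lt_mono: "deg_lt m f \<Longrightarrow> m \<le> n \<Longrightarrow> deg_lt n f"
proof (induction arbitrary: n rule: deg_lt.induct)
  case (zero n)
  show ?case by (rule deg_lt.zero)
next
  case (const m a n)
  then obtain n' where "n = Suc n'" by (cases n) auto
  thus ?case by (simp add: deg_lt.const)
next
  case (var m i n)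
  then have "n = Suc (Suc (n - 2))" by simp
  then show ?case by (metis deg_lt.var)
next
  case (add m f g n)
  thus ?case by (simp add: deg_lt.add)
next
  case (smul m f a n)
  thus ?case by (simp add: deg_lt.smul)
next
  case (mul m f n0 g n)
  define r where "r = n - Suc m"
  have n: "n = Suc (m + r)" using mul.prems r_def by simp
  have "deg_lt (Suc r) g" using mul.IH(2)[of "Suc r"] mul.prems r_def by simp
  from deg_lt.mul[OF mul.hyps(1) this] n show ?case by simp
qed

definition vplus :: "(nat \<Rightarrow> int) \<Rightarrow> (nat \<Rightarrow> int) \<Rightarrow> nat \<Rightarrow> int" where
  "vplus x v = (\<lambda>i. x i + v i)"

lemma deg_lt_shift: "deg_lt n f \<Longrightarrow> deg_lt n (\<lambda>x. f (vplus x v))"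
proof (induction rule: deg_lt.induct)
  case (var n i)
  have "deg_lt (Suc (Suc n)) (\<lambda>x. x i + v i)"
    by (rule deg_lt.add[OF deg_lt.var deg_lt.const])
  thus ?case by (simp add: vplus_def)
qed (auto intro: deg_lt.intros)

lemma deg_lt_sub: "deg_lt n f \<Longrightarrow> deg_lt n g \<Longrightarrow> deg_lt n (\<lambda>x. f x - g x)"
proof -
  assume a: "deg_lt n f" "deg_lt n g"
  have "deg_lt n (\<lambda>x. f x + (-1) * g x)"
    by (rule deg_lt.add[OF a(1) deg_lt.smul[OF a(2)]])
  thus ?thesis by (rule deg_lt_cong) simp
qed

definition dif :: "(nat \<Rightarrow> int) \<Rightarrow> ((nat \<Rightarrow> int) \<Rightarrow> int) \<Rightarrow> (nat \<Rightarrow> int) \<Rightarrow> int" where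
  "dif v f = (\<lambda>x. f (vplus x v) - f x)"

lemma deg_lt_dif: "deg_lt n f \<Longrightarrow> deg_lt (n - 1) (dif v f)"
proof (induction rule: deg_lt.induct)
  case (zero n)
  show ?case unfolding dif_def by (rule deg_lt_cong[OF deg_lt.zero]) simp
next
  case (const n a)
  show ?case unfolding dif_def by (rule deg_lt_cong[OF deg_lt.zero]) simp
next
  case (var n i)
  have "deg_lt (Suc n) (dif v (\<lambda>x. x i))"
    by (rule deg_lt_cong[OF deg_lt.const[of n "v i"]]) (simp add: dif_def vplus_def)
  thus ?case by simp
next
  case (add n f g)
  show ?case unfolding dif_def
    by (rule deg_lt_cong[OF deg_lt.add[OF add.IH[unfolded dif_def]]]) simp
next
  case (smul n f a)
  show ?case unfolding dif_def
    by (rule deg_lt_cong[OF deg_lt.smul[OF smul.IH[unfolded dif_def], of a]])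
       (simp add: algebra_simps)
next
  case (mul m f n g)
  have h1: "deg_lt (m + n) (\<lambda>x. dif v f x * g (vplus x v))"
  proof (cases m)
    case 0
    then have "dif v f = (\<lambda>x. 0)" using mul.IH(1) deg_lt_0 by simp
    then show ?thesis by (simp add: deg_lt.zero)
  next
    case (Suc m')
    have "deg_lt (Suc (m' + n)) (\<lambda>x. dif v f x * g (vplus x v))"
      by (rule deg_lt.mul) (use mul.IH(1) Suc deg_lt_shift[OF mul.hyps(2)] in auto)
    thus ?thesis using Suc by simp
  qed
  have h2: "deg_lt (m + n) (\<lambda>x. f x * dif v g x)"
  proof (cases n)
    case 0
    then have "dif v g = (\<lambda>x. 0)" using mul.IH(2) deg_lt_0 by simp
    then show ?thesis by (simp add: deg_lt.zero)
  next
    case (Suc n')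
    have "deg_lt (Suc (m + n')) (\<lambda>x. f x * dif v g x)"
      by (rule deg_lt.mul) (use mul.IH(2) Suc mul.hyps(1) in auto)
    thus ?thesis using Suc by simp
  qed
  have "deg_lt (m + n) (dif v (\<lambda>x. f x * g x))"
    by (rule deg_lt_cong[OF deg_lt.add[OF h1 h2]]) (simp add: dif_def algebra_simps)
  thus ?case by simp
qed

lemma deg_lt_difpow: "deg_lt n f \<Longrightarrow> deg_lt (n - j) ((dif v ^^ j) f)"
proof (induction j)
  case 0
  then show ?case by simp
next
  case (Suc j)
  have "deg_lt (n - j - 1) (dif v ((dif v ^^ j) f))"
    by (rule deg_lt_dif) (use Suc in auto)
  thus ?case by simp
qed

lemma deg_lt_congr:
  "deg_lt n f \<Longrightarrow> (\<And>i. [x i = y i] (mod q)) \<Longrightarrow> [f x = f y] (mod q)"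
proof (induction rule: deg_lt.induct)
  case (add n f g) thus ?case by (simp add: cong_add)
next
  case (smul n f a) thus ?case by (simp add: cong_scalar_left)
next
  case (mul m f n g) thus ?case by (simp add: cong_mult)
qed auto

lemma binom_alt:
  fixes g :: "nat \<Rightarrow> int"
  shows "(\<Sum>j\<le>m. (-1)^(m-j) * int (m choose j) * g (Suc j))
       - (\<Sum>j\<le>m. (-1)^(m-j) * int (m choose j) * g j)
       = (\<Sum>j\<le>Suc m. (-1)^(Suc m-j) * int (Suc m choose j) * g j)"
proof -
  have A: "(\<Sum>j\<le>Suc m. (-1)^(Suc m-j) * int (Suc m choose j) * g j)
     = (-1)^(Suc m) * g 0 + (\<Sum>j\<le>m. (-1)^(m-j) * int (m choose j) * g (Suc j))
       + (\<Sum>j\<le>m. (-1)^(m-j) * int (m choose Suc j) * g (Suc j))"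
    by (subst sum.atMost_Suc_shift) (simp add: sum.distrib algebra_simps)
  have B: "(\<Sum>j\<le>m. (-1)^(m-j) * int (m choose j) * g j)
     = (-1)^m * g 0 + (\<Sum>j<m. (-1)^(m - Suc j) * int (m choose Suc j) * g (Suc j))"
    by (subst sum.atMost_shift) simp
  have C: "(\<Sum>j\<le>m. (-1)^(m-j) * int (m choose Suc j) * g (Suc j))
     = (\<Sum>j<m. (-1)^(m-j) * int (m choose Suc j) * g (Suc j))"
  proof -
    have "{..m} = insert m {..<m}" by auto
    then show ?thesis by simp
  qed
  have D: "(\<Sum>j<m. (-1)^(m-j) * int (m choose Suc j) * g (Suc j))
     = - (\<Sum>j<m. (-1)^(m - Suc j) * int (m choose Suc j) * g (Suc j))"
  proof -
    have "(\<Sum>j<m. (-1)^(m-j) * int (m choose Suc j) * g (Suc j))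
       = (\<Sum>j<m. - ((-1)^(m - Suc j) * int (m choose Suc j) * g (Suc j)))"
    proof (rule sum.cong)
      fix j assume "j \<in> {..<m}"
      then have "m - j = Suc (m - Suc j)" by auto
      then show "(-1)^(m-j) * int (m choose Suc j) * g (Suc j)
             = - ((-1)^(m - Suc j) * int (m choose Suc j) * g (Suc j))" by simp
    qed simp
    thus ?thesis by (simp add: sum_negf)
  qed
  have E: "(-1::int)^(Suc m) * g 0 = - ((-1)^m * g 0)" by simp
  show ?thesis using A B C D E by linarith
qed

lemma difpow_expand:
  "(dif v ^^ m) f x = (\<Sum>j\<le>m. (-1)^(m-j) * int (m choose j) * f (vplus x (\<lambda>i. int j * v i)))"
proof (induction m arbitrary: x)
  case 0
  have "vplus x (\<lambda>i. 0) = x" by (simp add: vplus_def)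
  then show ?case by simp
next
  case (Suc m)
  have e: "vplus (vplus x v) (\<lambda>i. int j * v i) = vplus x (\<lambda>i. int (Suc j) * v i)" for j
    by (simp add: vplus_def fun_eq_iff algebra_simps)
  have "(dif v ^^ Suc m) f x = (dif v ^^ m) f (vplus x v) - (dif v ^^ m) f x"
    by (simp add: dif_def)
  also have "\<dots> = (\<Sum>j\<le>m. (-1)^(m-j) * int (m choose j) * f (vplus x (\<lambda>i. int (Suc j) * v i)))
      - (\<Sum>j\<le>m. (-1)^(m-j) * int (m choose j) * f (vplus x (\<lambda>i. int j * v i)))"
    by (simp add: Suc e)
  also have "\<dots> = (\<Sum>j\<le>Suc m. (-1)^(Suc m-j) * int (Suc m choose j) * f (vplus x (\<lambda>i. int j * v i)))"
    by (rule binom_alt[where g = "\<lambda>j. f (vplus x (\<lambda>i. int j * v i))"])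
  finally show ?case .
qed

lemma choose_mod:
  assumes "prime p" "j \<le> p - 1"
  shows "[int (p - 1 choose j) = (-1)^j] (mod int p)"
proof -
  obtain q where pq: "p = Suc q" using prime_gt_1_nat[OF assms(1)] by (cases p) auto
  have "j \<le> q" using assms(2) pq by simp
  then have "[int (q choose j) = (-1)^j] (mod int (Suc q))"
  proof (induction j)
    case 0 then show ?case by simp
  next
    case (Suc j)
    have "Suc q dvd (Suc q choose Suc j)"
      by (rule dvd_choose_prime) (use Suc.prems assms(1) pq in auto)
    then have "Suc q dvd (q choose j) + (q choose Suc j)" by simp
    then have "int (Suc q) dvd int (q choose j) + int (q choose Suc j)"
      by (metis int_dvd_int_iff of_nat_add)
    then have "[int (q choose Suc j) = - int (q choose j)] (mod int (Suc q))"
      unfolding cong_iff_dvd_diff by (simp add: add.commute)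
    also have "[- int (q choose j) = - ((-1)^j)] (mod int (Suc q))"
      using Suc by (simp add: cong_minus_minus_iff)
    finally show ?case by simp
  qed
  then show ?thesis using pq by simp
qed

lemma neg1_pow_pm1:
  assumes "prime p" shows "[(-1::int)^(p-1) = 1] (mod int p)"
proof (cases "p = 2")
  case True
  then show ?thesis unfolding cong_def by simp
next
  case False
  have "p > 2" using False prime_ge_2_nat[OF assms] by simp
  then have "odd p" using assms prime_odd_nat by simp
  then have "even (p - 1)" by simp
  then show ?thesis by simp
qed

lemma sum_shift_cong:
  assumes "prime p"
  shows "[(\<Sum>c<p. f (vplus x (\<lambda>i. int c * v i))) = (dif v ^^ (p-1)) f x] (mod int p)"
proof -
  have A: "{..p-1} = {..<p}" using prime_gt_1_nat[OF assms] by auto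
  have "[(-1)^(p-1-j) * int (p - 1 choose j) * f (vplus x (\<lambda>i. int j * v i))
        = f (vplus x (\<lambda>i. int j * v i))] (mod int p)" if "j \<in> {..<p}" for j
  proof -
    have j: "j \<le> p - 1" using that by auto
    have "[(-1)^(p-1-j) * int (p - 1 choose j) = (-1)^(p-1-j) * (-1)^j] (mod int p)"
      by (rule cong_scalar_left) (rule choose_mod[OF assms j])
    also have jj: "p-1-j+j = p-1" using j by simp
    have "(-1::int)^(p-1-j) * (-1)^j = (-1)^(p-1)"
      by (metis power_add jj)
    also have "[\<dots> = 1] (mod int p)" by (rule neg1_pow_pm1[OF assms])
    finally show ?thesis by (metis cong_scalar_right mult_1)
  qed
  then have S: "[(\<Sum>j<p. (-1)^(p-1-j) * int (p - 1 choose j) * f (vplus x (\<lambda>i. int j * v i)))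
        = (\<Sum>c<p. f (vplus x (\<lambda>i. int c * v i)))] (mod int p)"
    by (rule cong_sum)
  show ?thesis unfolding difpow_expand A by (rule cong_sym[OF S])
qed

lemma Fvecs_finite: "finite (Fvecs p k)"
proof -
  have "Fvecs p k = {f. \<forall>x. (x \<in> {..<k} \<longrightarrow> f x \<in> {0..<int p}) \<and> (x \<notin> {..<k} \<longrightarrow> f x = 0)}"
    by (auto simp: Fvecs_def)
  show ?thesis unfolding \<open>Fvecs p k = _\<close> by (rule finite_set_of_finite_funs) auto
qed

lemma Fvecs_range: "v \<in> Fvecs p k \<Longrightarrow> p > 0 \<Longrightarrow> 0 \<le> v i \<and> v i < int p"
  unfolding Fvecs_def by (cases "i < k") auto

lemma subspace_finite: "lin_subspace p k V \<Longrightarrow> finite V"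
  unfolding lin_subspace_def using Fvecs_finite finite_subset by blast

lemma subspace_split:
  assumes p: "prime p" and V: "lin_subspace p k V" and v: "v \<in> V" "v \<noteq> (\<lambda>i. 0)"
  shows "\<exists>V' w. lin_subspace p k V' \<and> V' \<subset> V \<and>
     bij_betw (\<lambda>(x', c). (\<lambda>i. (x' i + int c * w i) mod int p)) (V' \<times> {..<p}) V"
proof -
  have p0: "p > 0" and p1: "int p > 1" using prime_gt_1_nat[OF p] by auto
  have sub: "V \<subseteq> Fvecs p k" and z: "(\<lambda>i. 0) \<in> V"
    and cla: "\<And>u w. u \<in> V \<Longrightarrow> w \<in> V \<Longrightarrow> (\<lambda>i. (u i + w i) mod int p) \<in> V"
    and cls: "\<And>c u. c \<in> {0..<int p} \<Longrightarrow> u \<in> V \<Longrightarrow> (\<lambda>i. (c * u i) mod int p) \<in> V"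
    using V unfolding lin_subspace_def by blast+
  have rng: "\<And>x i. x \<in> V \<Longrightarrow> 0 \<le> x i \<and> x i < int p" using sub Fvecs_range p0 by blast
  obtain j where j: "v j \<noteq> 0" using v(2) by (auto simp: fun_eq_iff)
  have vj: "0 < v j" "v j < int p" using rng[OF v(1), of j] j by auto
  have "coprime (v j) (int p)"
  proof -
    have "prime (int p)" using p by simp
    moreover have "\<not> int p dvd v j" using vj zdvd_imp_le by fastforce
    ultimately show ?thesis using prime_imp_coprime coprime_commute by blast
  qed
  then obtain b0 where b0: "[v j * b0 = 1] (mod int p)" using cong_solve_coprime_int by blast
  define b where "b = b0 mod int p"
  have b: "0 \<le> b" "b < int p" using p1 by (auto simp: b_def)
  have bcong: "[v j * b = 1] (mod int p)" using b0
    unfolding b_def cong_def by (simp add: mod_mult_right_eq)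
  define w where "w = (\<lambda>i. (b * v i) mod int p)"
  have wV: "w \<in> V" unfolding w_def using cls b v(1) by auto
  have wj: "w j = 1" unfolding w_def using bcong p1 by (simp add: cong_def mult.commute)
  define V' where "V' = {x \<in> V. x j = 0}"
  have V'sub: "lin_subspace p k V'"
    unfolding lin_subspace_def V'_def using sub z cla cls by auto
  have "w \<notin> V'" using wj V'_def by simp
  moreover have "V' \<subseteq> V" by (auto simp: V'_def)
  ultimately have V'V: "V' \<subset> V" using wV by blast
  define \<phi> where "\<phi> = (\<lambda>(x'::nat\<Rightarrow>int, c::nat). (\<lambda>i. (x' i + int c * w i) mod int p))"
  have into: "\<phi> (x', c) \<in> V" if "x' \<in> V'" "c < p" for x' c
  proof -
    have s: "(\<lambda>i. (int c * w i) mod int p) \<in> V" using cls that(2) wV by auto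
    have "(\<lambda>i. (x' i + (int c * w i) mod int p) mod int p) \<in> V"
      using cla[OF _ s, of x'] that(1) unfolding V'_def by auto
    moreover have "(\<lambda>i. (x' i + (int c * w i) mod int p) mod int p) = \<phi> (x', c)"
      unfolding \<phi>_def by (simp add: fun_eq_iff mod_add_right_eq)
    ultimately show ?thesis by simp
  qed
  have inj: "inj_on \<phi> (V' \<times> {..<p})"
  proof (rule inj_onI)
    fix a b' assume a: "a \<in> V' \<times> {..<p}" and b': "b' \<in> V' \<times> {..<p}" and eq: "\<phi> a = \<phi> b'"
    obtain x1 c1 where a1: "a = (x1, c1)" by (cases a)
    obtain x2 c2 where b1: "b' = (x2, c2)" by (cases b')
    have x1: "x1 \<in> V" "x1 j = 0" "c1 < p" using a a1 V'_def by auto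
    have x2: "x2 \<in> V" "x2 j = 0" "c2 < p" using b' b1 V'_def by auto
    have "\<phi> a j = int c1" unfolding a1 \<phi>_def using x1 wj by simp
    moreover have "\<phi> b' j = int c2" unfolding b1 \<phi>_def using x2 wj by simp
    ultimately have c: "c1 = c2" using eq by simp
    have "x1 i = x2 i" for i
    proof -
      have "\<phi> a i = \<phi> b' i" using eq by simp
      then have "(x1 i + int c1 * w i) mod int p = (x2 i + int c1 * w i) mod int p"
        using c unfolding a1 b1 \<phi>_def by simp
      then have "[x1 i + int c1 * w i = x2 i + int c1 * w i] (mod int p)" by (simp add: cong_def)
      then have "[x1 i = x2 i] (mod int p)" by (simp add: cong_add_rcancel)
      then show ?thesis using rng[OF x1(1), of i] rng[OF x2(1), of i]
        by (metis cong_def mod_pos_pos_trivial)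
    qed
    then have "x1 = x2" by auto
    then show "a = b'" using a1 b1 c by simp
  qed
  have onto: "V \<subseteq> \<phi> ` (V' \<times> {..<p})"
  proof
    fix x assume xV: "x \<in> V"
    have xj: "0 \<le> x j" "x j < int p" using rng[OF xV] by auto
    define s where "s = (int p - x j) mod int p"
    have s: "0 \<le> s" "s < int p" using p1 by (auto simp: s_def)
    have t: "(\<lambda>i. (s * w i) mod int p) \<in> V" using cls s wV by auto
    define x' where "x' = (\<lambda>i. (x i + (s * w i) mod int p) mod int p)"
    have x'V: "x' \<in> V" unfolding x'_def using cla[OF xV t] .
    have zs: "(x j + s) mod int p = 0" unfolding s_def by (simp add: mod_simps)
    have "x' j = (x j + s) mod int p" unfolding x'_def using wj s by simp
    then have "x' j = 0" using zs by simp
    then have x'V': "x' \<in> V'" using x'V V'_def by simp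
    have zs2: "(s + x j) mod int p = 0" using zs by (simp add: add.commute)
    have "\<phi> (x', nat (x j)) = x"
    proof
      fix i
      have "\<phi> (x', nat (x j)) i = (x' i + x j * w i) mod int p" using xj by (simp add: \<phi>_def)
      also have "\<dots> = (x i + s * w i + x j * w i) mod int p" unfolding x'_def by (simp add: mod_simps)
      also have "\<dots> = (x i + (s + x j) * w i) mod int p" by (simp add: algebra_simps)
      also have "\<dots> = (x i + ((s + x j) mod int p) * w i) mod int p"
        by (metis mod_add_right_eq mod_mult_left_eq)
      also have "\<dots> = x i" using rng[OF xV, of i] zs2 by simp
      finally show "\<phi> (x', nat (x j)) i = x i" .
    qed
    moreover have "nat (x j) < p" using xj by simp
    ultimately show "x \<in> \<phi> ` (V' \<times> {..<p})" using x'V' by force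
  qed
  have "bij_betw \<phi> (V' \<times> {..<p}) V"
    unfolding bij_betw_def using inj into onto by auto
  then show ?thesis using V'sub V'V unfolding \<phi>_def by blast
qed

lemma subspace_nonzero:
  assumes "lin_subspace p k V" "card V > 1"
  shows "\<exists>v\<in>V. v \<noteq> (\<lambda>i. 0)"
proof (rule ccontr)
  assume "\<not> ?thesis"
  then have "V \<subseteq> {\<lambda>i. 0}" by auto
  then have "card V \<le> 1" by (metis card.empty card_mono finite.emptyI finite_insert is_singleton_altdef
      is_singleton_def le_numeral_extra(4) zero_le_one card_le_Suc0_iff_eq subset_singletonD)
  with assms show False by simp
qed

lemma subspace_card:
  assumes p: "prime p"
  shows "lin_subspace p k V \<Longrightarrow> \<exists>d. card V = p^d"
proof (induction "card V" arbitrary: V rule: less_induct)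
  case less
  have fin: "finite V" using subspace_finite[OF less.prems] .
  have z: "(\<lambda>i. 0) \<in> V" using less.prems unfolding lin_subspace_def by blast
  show ?case
  proof (cases "card V \<le> 1")
    case True
    have "card V \<ge> 1" using fin z by (metis One_nat_def Suc_leI card_gt_0_iff empty_iff)
    then have "card V = p^0" using True by simp
    then show ?thesis by blast
  next
    case False
    then obtain v where v: "v \<in> V" "v \<noteq> (\<lambda>i. 0)" using subspace_nonzero[OF less.prems] by auto
    obtain V' w where V': "lin_subspace p k V'" "V' \<subset> V"
      and bij: "bij_betw (\<lambda>(x', c). (\<lambda>i. (x' i + int c * w i) mod int p)) (V' \<times> {..<p}) V"
      using subspace_split[OF p less.prems v] by blast
    have "card V' < card V" using psubset_card_mono[OF fin V'(2)] .
    then obtain d where d: "card V' = p^d" using less.hyps[OF _ V'(1)] by blast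
    have "card V = card V' * p" using bij_betw_same_card[OF bij] by (simp add: card_cartesian_product)
    then have "card V = p^(Suc d)" using d by simp
    then show ?thesis by blast
  qed
qed

lemma sum_vanish:
  assumes p: "prime p"
  shows "lin_subspace p k V \<Longrightarrow> card V = p^d \<Longrightarrow> deg_lt n F \<Longrightarrow> n \<le> (p-1)*d
     \<Longrightarrow> [(\<Sum>x\<in>V. F x) = 0] (mod int p)"
proof (induction d arbitrary: V n F)
  case 0
  then have "F = (\<lambda>x. 0)" using deg_lt_0 by simp
  then show ?case by simp
next
  case (Suc d)
  have p1: "p > 1" using prime_gt_1_nat[OF p] .
  have "1 < p^(Suc d)" using p1 by (rule one_less_power) simp
  then have "card V > 1" using Suc.prems(2) by simp
  then obtain v where v: "v \<in> V" "v \<noteq> (\<lambda>i. 0)" using subspace_nonzero[OF Suc.prems(1)] by auto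
  obtain V' w where V': "lin_subspace p k V'" "V' \<subset> V"
    and bij: "bij_betw (\<lambda>(x', c). (\<lambda>i. (x' i + int c * w i) mod int p)) (V' \<times> {..<p}) V"
    using subspace_split[OF p Suc.prems(1) v] by blast
  have "card V = card V' * p" using bij_betw_same_card[OF bij] by (simp add: card_cartesian_product)
  then have cV': "card V' = p^d" using Suc.prems(2) p1 by (simp add: mult.commute)
  define G where "G = (dif w ^^ (p-1)) F"
  have G: "deg_lt (n - (p-1)) G" by (simp add: G_def deg_lt_difpow Suc.prems(3))
  have n': "n - (p-1) \<le> (p-1)*d" using Suc.prems(4) by (simp add: algebra_simps)
  have IH: "[(\<Sum>x\<in>V'. G x) = 0] (mod int p)" using Suc.IH[OF V'(1) cV' G n'] .
  have "(\<Sum>x\<in>V. F x) = (\<Sum>y\<in>V' \<times> {..<p}. F ((\<lambda>(x', c). (\<lambda>i. (x' i + int c * w i) mod int p)) y))"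
    using sum.reindex_bij_betw[OF bij, of F] by simp
  also have "\<dots> = (\<Sum>x'\<in>V'. \<Sum>c<p. F (\<lambda>i. (x' i + int c * w i) mod int p))"
    by (simp add: sum.cartesian_product split_def)
  finally have eq: "(\<Sum>x\<in>V. F x) = (\<Sum>x'\<in>V'. \<Sum>c<p. F (\<lambda>i. (x' i + int c * w i) mod int p))" .
  have inner: "[(\<Sum>c<p. F (\<lambda>i. (x' i + int c * w i) mod int p)) = G x'] (mod int p)" for x'
  proof -
    have "[F (\<lambda>i. (x' i + int c * w i) mod int p) = F (vplus x' (\<lambda>i. int c * w i))] (mod int p)" for c
      by (rule deg_lt_congr[OF Suc.prems(3)]) (simp add: vplus_def cong_def)
    then have "[(\<Sum>c<p. F (\<lambda>i. (x' i + int c * w i) mod int p))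
          = (\<Sum>c<p. F (vplus x' (\<lambda>i. int c * w i)))] (mod int p)"
      by (rule cong_sum)
    also have "[(\<Sum>c<p. F (vplus x' (\<lambda>i. int c * w i))) = G x'] (mod int p)"
      unfolding G_def by (rule sum_shift_cong[OF p])
    finally show ?thesis .
  qed
  have "[(\<Sum>x'\<in>V'. \<Sum>c<p. F (\<lambda>i. (x' i + int c * w i) mod int p)) = (\<Sum>x'\<in>V'. G x')] (mod int p)"
    by (rule cong_sum) (rule inner)
  then show ?case using IH eq by (metis cong_trans)
qed

lemma deg_prod_lin:
  assumes "finite A"
  shows "deg_lt (Suc (card A)) (\<lambda>x. \<Prod>s\<in>A. (x i - s))"
  using assms
proof (induction rule: finite_induct)
  case empty
  have "deg_lt (Suc 0) (\<lambda>x. \<Prod>s\<in>{}. (x i - s))"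
    by (rule deg_lt_cong[OF deg_lt.const[of 0 1]]) simp
  then show ?case by simp
next
  case (insert a A)
  have l: "deg_lt (Suc (Suc 0)) (\<lambda>x. x i - a)"
    by (rule deg_lt_sub[OF deg_lt.var[of 0 i] deg_lt.const[of "Suc 0" a]])
  have "deg_lt (Suc (Suc 0 + card A)) (\<lambda>x. (x i - a) * (\<Prod>s\<in>A. (x i - s)))"
    by (rule deg_lt.mul[OF l insert.IH])
  then show ?case using insert by simp
qed

lemma deg_prod_prod:
  assumes "finite A"
  shows "deg_lt (Suc (k * card A)) (\<lambda>x. \<Prod>i<k. \<Prod>s\<in>A. (x i - s))"
proof (induction k)
  case 0
  have "deg_lt (Suc 0) (\<lambda>x. \<Prod>i<0. \<Prod>s\<in>A. (x i - s))"
    by (rule deg_lt_cong[OF deg_lt.const[of 0 1]]) simp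
  then show ?case by simp
next
  case (Suc k)
  have "deg_lt (Suc (k * card A + card A))
      (\<lambda>x. (\<Prod>i<k. \<Prod>s\<in>A. (x i - s)) * (\<Prod>s\<in>A. (x k - s)))"
    by (rule deg_lt.mul[OF Suc.IH deg_prod_lin[OF assms]])
  then show ?case by (simp add: add.commute mult.commute)
qed

lemma indep_upper:
  assumes p: "prime p" and S: "cayley_conn_set p S"
    and h: "2 * card ({1..<int p} - S) \<le> p - 1"
    and V: "lin_subspace p k V" and I: "strong_indep p S k V"
  shows "\<exists>d. card V = p^d \<and> 2 * d \<le> k"
proof -
  define Sb where "Sb = {1..<int p} - S"
  have finSb: "finite Sb" unfolding Sb_def by simp
  have p1: "p > 1" using prime_gt_1_nat[OF p] .
  obtain d where d: "card V = p^d" using subspace_card[OF p V] by blast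
  define F where "F = (\<lambda>x. \<Prod>i<k. \<Prod>s\<in>Sb. (x i - s))"
  have degF: "deg_lt (Suc (k * card Sb)) F" unfolding F_def by (rule deg_prod_prod[OF finSb])
  have z: "(\<lambda>i. 0) \<in> V" using V unfolding lin_subspace_def by blast
  have sub: "V \<subseteq> Fvecs p k" using V unfolding lin_subspace_def by blast
  have F0: "F x = 0" if xV: "x \<in> V" and xn: "x \<noteq> (\<lambda>i. 0)" for x
  proof -
    have "\<not> strong_adj p S k x (\<lambda>i. 0)" using I xV z unfolding strong_indep_def by blast
    then obtain i where i: "i < k" "x i \<noteq> 0" "\<not> cay_adj p S (x i) 0"
      using xn unfolding strong_adj_def by auto
    have r: "0 \<le> x i" "x i < int p" using Fvecs_range[of x p k i] sub xV p1 by auto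
    then have "x i \<notin> S" using i(3) unfolding cay_adj_def by simp
    then have "x i \<in> Sb" using r i(2) unfolding Sb_def by auto
    then have "(\<Prod>s\<in>Sb. (x i - s)) = 0" using finSb by (metis prod_zero_iff right_minus_eq)
    then show ?thesis unfolding F_def using i(1) by (metis finite_lessThan lessThan_iff prod_zero_iff)
  qed
  have sumF: "(\<Sum>x\<in>V. F x) = F (\<lambda>i. 0)"
  proof -
    have fin: "finite V" using subspace_finite[OF V] .
    have "(\<Sum>x\<in>V. F x) = F (\<lambda>i. 0) + (\<Sum>x\<in>V - {\<lambda>i. 0}. F x)"
      using sum.remove[OF fin z] by simp
    also have "(\<Sum>x\<in>V - {\<lambda>i. 0}. F x) = 0" using F0 by (intro sum.neutral) auto
    finally show ?thesis by simp
  qed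
  have ndvd: "\<not> int p dvd F (\<lambda>i. 0)"
  proof
    assume a: "int p dvd F (\<lambda>i. 0)"
    have pp: "prime (int p)" using p by simp
    from a obtain i where "i < k" "int p dvd (\<Prod>s\<in>Sb. (0 - s))"
      unfolding F_def using prime_dvd_prod_iff[OF _ pp] by (metis finite_lessThan lessThan_iff)
    then obtain s where s: "s \<in> Sb" "int p dvd (0 - s)"
      using prime_dvd_prod_iff[OF finSb pp] by blast
    have "1 \<le> s" "s < int p" using s(1) unfolding Sb_def by auto
    moreover have "int p dvd s" using s(2) by simp
    ultimately show False using zdvd_imp_le by fastforce
  qed
  have "(p - 1) * d < Suc (k * card Sb)"
  proof (rule ccontr)
    assume "\<not> ?thesis"
    then have "Suc (k * card Sb) \<le> (p - 1) * d" by simp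
    then have "[(\<Sum>x\<in>V. F x) = 0] (mod int p)" using sum_vanish[OF p V d degF] by blast
    then show False using ndvd sumF by (simp add: cong_0_iff)
  qed
  then have "(p - 1) * d \<le> k * card Sb" by simp
  then have "2 * ((p - 1) * d) \<le> k * (2 * card Sb)" by simp
  also have "\<dots> \<le> k * (p - 1)" using h unfolding Sb_def by simp
  finally have "(p - 1) * (2 * d) \<le> (p - 1) * k" by (simp add: algebra_simps)
  then have "2 * d \<le> k" using p1 by simp
  then show ?thesis using d by blast
qed

locale turner =
  fixes p :: nat and S :: "int set" and F :: "int \<Rightarrow> int"
  assumes prime: "prime p" and conn: "cayley_conn_set p S"
    and Fperm: "F permutes {0..<int p}"
    and Fanti: "\<And>u v. u \<in> {0..<int p} \<Longrightarrow> v \<in> {0..<int p} \<Longrightarrow> u \<noteq> v \<Longrightarrow>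
        cay_adj p S u v \<longleftrightarrow> \<not> cay_adj p S (F u) (F v)"
begin

abbreviation U where "U \<equiv> {0..<int p}"

definition rot :: "int \<Rightarrow> int \<Rightarrow> int" where
  "rot i = (\<lambda>x. if x \<in> U then (x + i) mod int p else x)"

definition Aut where
  "Aut = {g. g permutes U \<and> (\<forall>u\<in>U. \<forall>v\<in>U. cay_adj p S (g u) (g v) = cay_adj p S u v)}"

definition sig where "sig j = F \<circ> rot j \<circ> inv_into UNIV F"

definition N where "N = {g \<in> Aut. \<exists>m. rot 1 \<circ> g = g \<circ> sig m}"

lemma p1: "int p > 1" using prime_gt_1_nat[OF prime] by simp

lemma rot_in: "x \<in> U \<Longrightarrow> rot i x \<in> U"
  unfolding rot_def using p1 by auto

lemma rot_comp: "rot i \<circ> rot j = rot (i + j)"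
proof
  fix x
  show "(rot i \<circ> rot j) x = rot (i + j) x"
  proof (cases "x \<in> U")
    case True
    then have "rot j x \<in> U" by (rule rot_in)
    then show ?thesis using True unfolding rot_def by (simp add: mod_simps algebra_simps)
  next
    case False then show ?thesis unfolding rot_def by auto
  qed
qed

lemma rot_comp_apply: "rot i (rot j x) = rot (i + j) x"
  using rot_comp[of i j] by (metis comp_apply)

lemma rot0: "rot 0 = id"
  unfolding rot_def by (auto simp: fun_eq_iff)

lemma rot_perm: "rot i permutes U"
  unfolding permutes_def
proof (intro conjI allI impI)
  fix x assume "x \<notin> U" then show "rot i x = x" unfolding rot_def by auto
next
  fix y
  show "\<exists>!x. rot i x = y"
  proof
    show "rot i (rot (-i) y) = y" using rot_comp_apply[of i "-i" y] rot0 by simp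
  next
    fix x assume "rot i x = y"
    then have "rot (-i) (rot i x) = rot (-i) y" by simp
    then show "x = rot (-i) y" using rot_comp_apply[of "-i" i x] rot0 by simp
  qed
qed

lemma rot_mod: "rot i = rot (i mod int p)"
  unfolding rot_def by (auto simp: fun_eq_iff mod_simps)

lemma rot_eq: "rot i = rot j \<Longrightarrow> [i = j] (mod int p)"
proof -
  assume "rot i = rot j"
  then have "rot i 0 = rot j 0" by simp
  then show ?thesis using p1 unfolding rot_def cong_def by simp
qed

lemma adj_mod: "cay_adj p S u v \<longleftrightarrow> cay_adj p S (u mod int p) (v mod int p)"
  unfolding cay_adj_def by (simp add: mod_diff_eq)

lemma rot_aut: "rot i \<in> Aut"
  unfolding Aut_def
proof (intro CollectI conjI ballI rot_perm)
  fix u v assume "u \<in> U" "v \<in> U"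
  then have "cay_adj p S (rot i u) (rot i v) = cay_adj p S (u + i) (v + i)"
    unfolding rot_def using adj_mod[of "u+i" "v+i"] by simp
  also have "\<dots> = cay_adj p S u v" unfolding cay_adj_def by simp
  finally show "cay_adj p S (rot i u) (rot i v) = cay_adj p S u v" .
qed

lemma Aut_perm: "g \<in> Aut \<Longrightarrow> g permutes U" unfolding Aut_def by blast

lemma Aut_adj: "g \<in> Aut \<Longrightarrow> u \<in> U \<Longrightarrow> v \<in> U \<Longrightarrow> cay_adj p S (g u) (g v) = cay_adj p S u v"
  unfolding Aut_def by blast

lemma Aut_comp: "g \<in> Aut \<Longrightarrow> h \<in> Aut \<Longrightarrow> g \<circ> h \<in> Aut"
proof -
  assume g: "g \<in> Aut" and h: "h \<in> Aut"
  show ?thesis unfolding Aut_def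
  proof (intro CollectI conjI ballI permutes_compose[OF Aut_perm[OF h] Aut_perm[OF g]])
    fix u v assume uv: "u \<in> U" "v \<in> U"
    have "h u \<in> U" "h v \<in> U" using uv permutes_in_image[OF Aut_perm[OF h]] by auto
    then have "cay_adj p S (g (h u)) (g (h v)) = cay_adj p S (h u) (h v)" using Aut_adj[OF g] by blast
    also have "\<dots> = cay_adj p S u v" using Aut_adj[OF h uv] .
    finally show "cay_adj p S ((g \<circ> h) u) ((g \<circ> h) v) = cay_adj p S u v" by simp
  qed
qed

lemma adj_irrefl: "\<not> cay_adj p S x x"
  using conn unfolding cay_adj_def cayley_conn_set_def by auto

lemma Aut_inv: "g \<in> Aut \<Longrightarrow> inv_into UNIV g \<in> Aut"
proof -
  assume g: "g \<in> Aut"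
  have gp: "g permutes U" using g Aut_perm by blast
  show ?thesis unfolding Aut_def
  proof (intro CollectI conjI ballI permutes_inv[OF gp])
    fix u v assume uv: "u \<in> U" "v \<in> U"
    have "cay_adj p S (g (inv_into UNIV g u)) (g (inv_into UNIV g v)) = cay_adj p S (inv_into UNIV g u) (inv_into UNIV g v)"
      by (rule Aut_adj[OF g]) (use uv permutes_in_image[OF permutes_inv[OF gp]] in auto)
    then show "cay_adj p S (inv_into UNIV g u) (inv_into UNIV g v) = cay_adj p S u v"
      by (simp add: permutes_inverses[OF gp])
  qed
qed

lemma Aut_id: "id \<in> Aut" unfolding Aut_def by auto

lemma Finv_perm: "inv_into UNIV F permutes U" using permutes_inv[OF Fperm] .

lemma sig_perm: "sig j permutes U"
  unfolding sig_def by (intro permutes_compose Finv_perm rot_perm Fperm)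

lemma F_in: "x \<in> U \<Longrightarrow> F x \<in> U" using permutes_in_image[OF Fperm] by simp
lemma Finv_in: "x \<in> U \<Longrightarrow> inv_into UNIV F x \<in> U" using permutes_in_image[OF Finv_perm] by simp

lemma sig_aut: "sig j \<in> Aut"
  unfolding Aut_def
proof (intro CollectI conjI ballI sig_perm)
  fix u v assume uv: "u \<in> U" "v \<in> U"
  define u' where "u' = inv_into UNIV F u"
  define v' where "v' = inv_into UNIV F v"
  have u'v': "u' \<in> U" "v' \<in> U" using uv Finv_in u'_def v'_def by auto
  have Fu: "F u' = u" "F v' = v" unfolding u'_def v'_def using permutes_inverses[OF Fperm] by auto
  show "cay_adj p S (sig j u) (sig j v) = cay_adj p S u v"
  proof (cases "u = v")
    case True then show ?thesis by (simp add: adj_irrefl)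
  next
    case False
    then have ne: "u' \<noteq> v'" using Fu by auto
    have ne2: "rot j u' \<noteq> rot j v'"
      using ne permutes_inj[OF rot_perm[of j]] by (meson injD)
    have r: "rot j u' \<in> U" "rot j v' \<in> U" using rot_in u'v' by auto
    have "cay_adj p S (sig j u) (sig j v) = cay_adj p S (F (rot j u')) (F (rot j v'))"
      unfolding sig_def u'_def v'_def by simp
    also have "\<dots> = (\<not> cay_adj p S (rot j u') (rot j v'))" using Fanti[OF r ne2] by simp
    also have "\<dots> = (\<not> cay_adj p S u' v')" using Aut_adj[OF rot_aut u'v'] by simp
    also have "\<dots> = cay_adj p S (F u') (F v')" using Fanti[OF u'v' ne] by simp
    finally show ?thesis using Fu by simp
  qed
qed

lemma FinvF: "F \<circ> inv_into UNIV F = id" "inv_into UNIV F \<circ> F = id" using permutes_inv_o[OF Fperm] by auto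

lemma sig_comp: "sig i \<circ> sig j = sig (i + j)"
proof -
  have "sig i \<circ> sig j = F \<circ> rot i \<circ> (inv_into UNIV F \<circ> F) \<circ> rot j \<circ> inv_into UNIV F"
    unfolding sig_def by (simp add: o_assoc)
  also have "\<dots> = F \<circ> (rot i \<circ> rot j) \<circ> inv_into UNIV F" by (simp add: FinvF o_assoc)
  finally show ?thesis by (simp add: rot_comp sig_def)
qed

lemma sig0: "sig 0 = id" unfolding sig_def by (simp add: rot0 FinvF)

lemma sig_mod: "sig j = sig (j mod int p)" unfolding sig_def using rot_mod by metis

lemma sig_eq: "sig i = sig j \<Longrightarrow> [i = j] (mod int p)"
proof -
  assume "sig i = sig j"
  moreover have "inv_into UNIV F \<circ> sig k \<circ> F = rot k" for k
    by (simp add: fun_eq_iff sig_def permutes_inverses[OF Fperm])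
  ultimately have "rot i = rot j" by metis
  then show ?thesis by (rule rot_eq)
qed

end

context turner begin

lemma perm_inv_comp:
  assumes "g permutes U" "h permutes U"
  shows "inv_into UNIV (inv_into UNIV g \<circ> h) = inv_into UNIV h \<circ> g"
proof -
  have bg: "bij (inv_into UNIV g)" using permutes_bij[OF permutes_inv[OF assms(1)]] .
  have bh: "bij h" using permutes_bij[OF assms(2)] .
  show ?thesis using o_inv_distrib[OF bg bh] permutes_inv_inv[OF assms(1)] by simp
qed

lemma finite_Aut: "finite Aut"
proof -
  have "Aut \<subseteq> {g. g permutes U}" using Aut_perm by blast
  then show ?thesis using finite_permutations[of U] finite_subset by auto
qed

lemma card_Aut_dvd: "card Aut dvd fact p"
proof -
  let ?P = "{g. g permutes U}"
  have finP: "finite ?P" using finite_permutations[of U] by simp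
  have cardP: "card ?P = fact p" using card_permutations[of U p] by simp
  define r where "r = {(g, h). g \<in> ?P \<and> h \<in> ?P \<and> inv_into UNIV g \<circ> h \<in> Aut}"
  have eq: "equiv ?P r"
  proof (rule equivI)
    show "r \<subseteq> ?P \<times> ?P" unfolding r_def by auto
    show "refl_on ?P r"
      unfolding refl_on_def r_def
    proof (intro conjI ballI)
      fix g assume "g \<in> ?P"
      then have "inv_into UNIV g \<circ> g = id" using permutes_inv_o(2)[of g U] by simp
      then show "(g, g) \<in> {(g, h). g \<in> ?P \<and> h \<in> ?P \<and> inv_into UNIV g \<circ> h \<in> Aut}"
        using Aut_id \<open>g \<in> ?P\<close> by simp
    qed
    show "sym r"
    proof (rule symI)
      fix g h assume "(g, h) \<in> r"
      then have g: "g permutes U" and h: "h permutes U" and a: "inv_into UNIV g \<circ> h \<in> Aut"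
        unfolding r_def by auto
      have "inv_into UNIV (inv_into UNIV g \<circ> h) \<in> Aut" using Aut_inv[OF a] .
      then have "inv_into UNIV h \<circ> g \<in> Aut" using perm_inv_comp[OF g h] by simp
      then show "(h, g) \<in> r" unfolding r_def using g h by auto
    qed
    show "trans r"
    proof (rule transI)
      fix g h k assume "(g, h) \<in> r" "(h, k) \<in> r"
      then have g: "g permutes U" and h: "h permutes U" and k: "k permutes U"
        and a: "inv_into UNIV g \<circ> h \<in> Aut" and b: "inv_into UNIV h \<circ> k \<in> Aut"
        unfolding r_def by auto
      have "(inv_into UNIV g \<circ> h) \<circ> (inv_into UNIV h \<circ> k) = inv_into UNIV g \<circ> (h \<circ> inv_into UNIV h) \<circ> k"
        by (simp add: o_assoc)
      also have "\<dots> = inv_into UNIV g \<circ> k" using permutes_inv_o(1)[OF h] by simp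
      finally have "inv_into UNIV g \<circ> k \<in> Aut" using Aut_comp[OF a b] by simp
      then show "(g, k) \<in> r" unfolding r_def using g k by auto
    qed
  qed
  have cls: "card Aut dvd card X" if XP: "X \<in> ?P // r" for X
  proof -
    obtain g where g: "g \<in> ?P" and X: "X = r `` {g}" using XP by (auto elim!: quotientE)
    have gp: "g permutes U" using g by simp
    have "X = (\<lambda>a. g \<circ> a) ` Aut"
    proof
      show "X \<subseteq> (\<lambda>a. g \<circ> a) ` Aut"
      proof
        fix h assume "h \<in> X"
        then have h: "inv_into UNIV g \<circ> h \<in> Aut" unfolding X r_def by auto
        have "g \<circ> (inv_into UNIV g \<circ> h) = h" using permutes_inv_o(1)[OF gp] by (simp add: o_assoc)
        then show "h \<in> (\<lambda>a. g \<circ> a) ` Aut" using h by (metis image_eqI)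
      qed
      show "(\<lambda>a. g \<circ> a) ` Aut \<subseteq> X"
      proof
        fix h assume "h \<in> (\<lambda>a. g \<circ> a) ` Aut"
        then obtain a where a: "a \<in> Aut" "h = g \<circ> a" by blast
        have "inv_into UNIV g \<circ> h = a" using a(2) permutes_inv_o(2)[OF gp] by (simp add: o_assoc)
        moreover have "h permutes U" using a permutes_compose[OF Aut_perm[OF a(1)] gp] by simp
        ultimately show "h \<in> X" unfolding X r_def using a(1) gp by auto
      qed
    qed
    moreover have "inj_on (\<lambda>a. g \<circ> a) Aut"
    proof (rule inj_onI)
      fix a b assume "g \<circ> a = g \<circ> b"
      then have "inv_into UNIV g \<circ> (g \<circ> a) = inv_into UNIV g \<circ> (g \<circ> b)" by simp
      then show "a = b" using permutes_inv_o(2)[OF gp] by (simp add: o_assoc)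
    qed
    ultimately have "card X = card Aut" by (simp add: card_image)
    then show ?thesis by simp
  qed
  have "card Aut dvd card ?P" by (rule equiv_imp_dvd_card[OF finP eq cls])
  then show ?thesis using cardP by simp
qed

lemma p2_not_dvd_Aut: "\<not> p^2 dvd card Aut"
proof
  assume "p^2 dvd card Aut"
  then have d: "p^2 dvd fact p" using card_Aut_dvd dvd_trans by blast
  have p0: "p > 0" using prime_gt_1_nat[OF prime] by simp
  have f: "fact p = p * fact (p - 1)" using fact_reduce[OF p0, where 'a=nat] by simp
  have "p * p dvd p * fact (p - 1)" using d f by (simp add: power2_eq_square)
  then have "p dvd fact (p - 1)" using p0 by simp
  then have "p \<le> p - 1" using prime_dvd_fact_iff[OF prime] by simp
  then show False using p0 by simp
qed

end

context turner begin

lemma sig_comp_apply: "sig i (sig j x) = sig (i + j) x"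
  using sig_comp[of i j] by (metis comp_apply)

definition act :: "int \<Rightarrow> (int \<Rightarrow> int) \<Rightarrow> int \<Rightarrow> int \<Rightarrow> int" where
  "act i g j = rot i \<circ> g \<circ> sig j"

lemma act_act: "act i (act i' g j') j = act (i + i') g (j' + j)"
  unfolding act_def by (simp add: fun_eq_iff rot_comp_apply sig_comp_apply)

lemma act00: "act 0 g 0 = g"
  unfolding act_def by (simp add: rot0 sig0)

lemma act_inv: "act (-i) (act i g j) (-j) = g"
  using act_act[of "-i" i g j "-j"] act00 by simp

lemma act_Aut: "g \<in> Aut \<Longrightarrow> act i g j \<in> Aut"
  unfolding act_def by (intro Aut_comp rot_aut sig_aut)

lemma act_mod: "act i g j = act (i mod int p) g (j mod int p)"
  unfolding act_def using rot_mod sig_mod by metis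

lemma N_act: "h \<in> N \<Longrightarrow> act i h j \<in> N"
proof -
  assume "h \<in> N"
  then obtain m where h: "h \<in> Aut" "rot 1 \<circ> h = h \<circ> sig m" unfolding N_def by blast
  have "rot 1 \<circ> act i h j = act (1 + i) h j" using act_act[of 1 0 h 0 j] unfolding act_def
    by (simp add: fun_eq_iff rot_comp_apply)
  also have "\<dots> = act i (rot 1 \<circ> h) j"
    unfolding act_def by (simp add: fun_eq_iff rot_comp_apply add.commute)
  also have "\<dots> = act i (h \<circ> sig m) j" using h(2) by simp
  also have "\<dots> = act i h j \<circ> sig m"
    unfolding act_def by (simp add: fun_eq_iff sig_comp_apply add.commute)
  finally show ?thesis unfolding N_def using act_Aut[OF h(1)] by blast
qed

lemma iter:
  assumes "rot e \<circ> g = g \<circ> sig e'"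
  shows "rot (e * int n) \<circ> g = g \<circ> sig (e' * int n)"
proof (induction n)
  case 0 then show ?case by (simp add: rot0 sig0)
next
  case (Suc n)
  have "rot (e * int (Suc n)) \<circ> g = rot e \<circ> (rot (e * int n) \<circ> g)"
    by (simp add: o_assoc rot_comp algebra_simps)
  also have "\<dots> = rot e \<circ> (g \<circ> sig (e' * int n))" by (simp only: Suc.IH)
  also have "\<dots> = (rot e \<circ> g) \<circ> sig (e' * int n)" by (simp only: comp_assoc)
  also have "\<dots> = (g \<circ> sig e') \<circ> sig (e' * int n)" by (simp only: assms)
  also have "\<dots> = g \<circ> (sig e' \<circ> sig (e' * int n))" by (simp only: comp_assoc)
  also have "\<dots> = g \<circ> sig (e' * int (Suc n))" by (simp add: sig_comp algebra_simps)
  finally show ?case .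
qed

lemma act_inj:
  assumes g: "g \<in> Aut - N"
  shows "inj_on (\<lambda>(i, j). act i g j) (U \<times> U)"
proof (rule inj_onI)
  fix a b assume a: "a \<in> U \<times> U" and b: "b \<in> U \<times> U"
    and e: "(\<lambda>(i, j). act i g j) a = (\<lambda>(i, j). act i g j) b"
  obtain i j where ij: "a = (i, j)" by (cases a)
  obtain i' j' where ij': "b = (i', j')" by (cases b)
  have e2: "act i g j = act i' g j'" using e ij ij' by simp
  have "act (-i') (act i g j) (-j) = act (-i') (act i' g j') (-j)" using e2 by simp
  then have key: "act (i - i') g 0 = act 0 g (j' - j)" using act_act by simp
  have ii: "i = i'"
  proof (rule ccontr)
    assume ne: "i \<noteq> i'"
    have "\<not> int p dvd (i - i')"
    proof
      assume "int p dvd (i - i')"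
      then have "[i = i'] (mod int p)" by (simp add: cong_iff_dvd_diff)
      then show False using ne a b ij ij' by (auto simp: cong_def)
    qed
    then have "coprime (i - i') (int p)"
      using prime prime_imp_coprime coprime_commute by (metis prime_nat_int_transfer)
    then obtain t where t: "[(i - i') * t = 1] (mod int p)" using cong_solve_coprime_int by blast
    define n where "n = nat (t mod int p)"
    have nt: "int n = t mod int p" unfolding n_def using p1 by simp
    have "[(i - i') * int n = 1] (mod int p)" using t unfolding nt cong_def
      by (simp add: mod_mult_right_eq)
    then have r1: "rot ((i - i') * int n) = rot 1"
      using rot_mod by (metis cong_def)
    have "rot (i - i') \<circ> g = g \<circ> sig (j' - j)" using key unfolding act_def by (simp add: rot0 sig0)
    then have "rot ((i - i') * int n) \<circ> g = g \<circ> sig ((j' - j) * int n)" by (rule iter)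
    then have "g \<in> N" using r1 g unfolding N_def by auto
    then show False using g by simp
  qed
  then have "act 0 g 0 = act 0 g (j' - j)" using key by simp
  then have "g = g \<circ> sig (j' - j)" using act00 unfolding act_def by (simp add: rot0)
  then have "inv_into UNIV g \<circ> g = inv_into UNIV g \<circ> g \<circ> sig (j' - j)" by (metis o_assoc)
  then have "sig 0 = sig (j' - j)" using permutes_inv_o(2)[OF Aut_perm] g by (simp add: sig0)
  then have "[0 = j' - j] (mod int p)" by (rule sig_eq)
  then have "[j = j'] (mod int p)" by (simp add: cong_iff_dvd_diff)
  then have "j = j'" using a b ij ij' by (auto simp: cong_def)
  then show "a = b" using ii ij ij' by simp
qed

lemma N_nonempty: "N \<noteq> {}"
proof
  assume N0: "N = {}"
  define A where "A = Aut - N"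
  have finA: "finite A" using finite_Aut A_def by simp
  have inA: "act i g j \<in> A" if "g \<in> A" for g i j
  proof -
    have "act i g j \<in> Aut" using that act_Aut A_def by simp
    moreover have "act i g j \<notin> N"
    proof
      assume "act i g j \<in> N"
      then have "act (-i) (act i g j) (-j) \<in> N" by (rule N_act)
      then show False using act_inv that A_def by simp
    qed
    ultimately show ?thesis using A_def by simp
  qed
  define q where "q = {(g, h). g \<in> A \<and> h \<in> A \<and> (\<exists>i j. h = act i g j)}"
  have eq: "equiv A q"
  proof (rule equivI)
    show "q \<subseteq> A \<times> A" unfolding q_def by auto
    show "refl_on A q" unfolding refl_on_def q_def using act00 by (auto intro!: exI[of _ 0])
    show "sym q"
    proof (rule symI)
      fix g h assume "(g, h) \<in> q"
      then obtain i j where gh: "g \<in> A" "h \<in> A" "h = act i g j" unfolding q_def by blast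
      then have "g = act (-i) h (-j)" using act_inv by simp
      then show "(h, g) \<in> q" unfolding q_def using gh by blast
    qed
    show "trans q"
    proof (rule transI)
      fix g h k assume "(g, h) \<in> q" "(h, k) \<in> q"
      then obtain i j i' j' where "g \<in> A" "k \<in> A" "h = act i g j" "k = act i' h j'"
        unfolding q_def by blast
      then show "(g, k) \<in> q" unfolding q_def using act_act by blast
    qed
  qed
  have cls: "p^2 dvd card X" if XP: "X \<in> A // q" for X
  proof -
    obtain g where g: "g \<in> A" and X: "X = q `` {g}" using XP by (auto elim!: quotientE)
    have "X = (\<lambda>(i, j). act i g j) ` (U \<times> U)"
    proof
      show "X \<subseteq> (\<lambda>(i, j). act i g j) ` (U \<times> U)"
      proof
        fix h assume "h \<in> X"
        then obtain i j where h: "h = act i g j" unfolding X q_def by blast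
        then have "h = act (i mod int p) g (j mod int p)" using act_mod by simp
        moreover have "(i mod int p, j mod int p) \<in> U \<times> U" using p1 by simp
        ultimately show "h \<in> (\<lambda>(i, j). act i g j) ` (U \<times> U)" by force
      qed
      show "(\<lambda>(i, j). act i g j) ` (U \<times> U) \<subseteq> X"
        unfolding X q_def using g inA by auto
    qed
    then have "card X = card (U \<times> U)"
      using act_inj[of g] g A_def by (simp add: card_image)
    also have "\<dots> = p^2" by (simp add: card_cartesian_product power2_eq_square)
    finally show ?thesis by simp
  qed
  have "p^2 dvd card A" by (rule equiv_imp_dvd_card[OF finA eq cls])
  then show False using N0 A_def p2_not_dvd_Aut by simp
qed

end

context turner begin

lemma multiplier_loc:
  "\<exists>a\<in>{1..<int p}. \<forall>x\<in>{1..<int p}. x \<in> S \<longleftrightarrow> (a * x) mod int p \<notin> S"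
proof -
  obtain g m where g: "g \<in> Aut" "rot 1 \<circ> g = g \<circ> sig m" using N_nonempty unfolding N_def by blast
  define \<psi> where "\<psi> = g \<circ> F"
  have gp: "g permutes U" using Aut_perm[OF g(1)] .
  have psiU: "\<psi> x \<in> U" if "x \<in> U" for x
    unfolding \<psi>_def using F_in[OF that] permutes_in_image[OF gp] by simp
  have comm: "rot 1 \<circ> \<psi> = \<psi> \<circ> rot m"
  proof -
    have "rot 1 \<circ> \<psi> = (rot 1 \<circ> g) \<circ> F" unfolding \<psi>_def by (simp add: o_assoc)
    also have "\<dots> = g \<circ> sig m \<circ> F" using g(2) by simp
    also have "\<dots> = \<psi> \<circ> rot m"
      unfolding \<psi>_def sig_def by (simp add: fun_eq_iff permutes_inverses[OF Fperm])
    finally show ?thesis .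
  qed
  have step: "\<psi> ((x + m) mod int p) = (\<psi> x + 1) mod int p" if "x \<in> U" for x
  proof -
    have "rot 1 (\<psi> x) = \<psi> (rot m x)" using comm by (metis comp_apply)
    then show ?thesis using that psiU[OF that] unfolding rot_def by simp
  qed
  have m0: "\<not> int p dvd m"
  proof
    assume "int p dvd m"
    then have "m mod int p = 0" by simp
    then have "rot m = id" using rot_mod rot0 by metis
    then have "rot 1 (\<psi> 0) = \<psi> 0" using comm by (metis comp_apply id_apply)
    moreover have "(0::int) \<in> U" using p1 by simp
    ultimately have "(\<psi> 0 + 1) mod int p = \<psi> 0" using psiU unfolding rot_def by simp
    then have "[\<psi> 0 + 1 = \<psi> 0] (mod int p)" using psiU[of 0] p1 by (simp add: cong_def)
    then have "int p dvd 1" by (simp add: cong_iff_dvd_diff)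
    then show False using p1 by simp
  qed
  have iter: "\<psi> ((x + int n * m) mod int p) = (\<psi> x + int n) mod int p" if "x \<in> U" for x n
  proof (induction n)
    case 0 then show ?case using that psiU[OF that] by simp
  next
    case (Suc n)
    define y where "y = (x + int n * m) mod int p"
    have yU: "y \<in> U" unfolding y_def using p1 by simp
    have "(x + int (Suc n) * m) mod int p = (y + m) mod int p"
      unfolding y_def by (simp add: mod_simps algebra_simps)
    then have "\<psi> ((x + int (Suc n) * m) mod int p) = (\<psi> y + 1) mod int p" using step[OF yU] by simp
    also have "\<dots> = (\<psi> x + int (Suc n)) mod int p" using Suc unfolding y_def[symmetric]
      by (simp add: mod_simps algebra_simps)
    finally show ?case .
  qed
  have "coprime m (int p)"
    using m0 prime prime_imp_coprime coprime_commute by (metis prime_nat_int_transfer)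
  then obtain t where t: "[m * t = 1] (mod int p)" using cong_solve_coprime_int by blast
  define a where "a = t mod int p"
  have am: "[a * m = 1] (mod int p)" using t unfolding a_def cong_def
    by (metis mod_mult_left_eq mult.commute)
  have a0: "a \<noteq> 0"
  proof
    assume "a = 0"
    then have "[0 = 1] (mod int p)" using am by simp
    then show False using p1 by (simp add: cong_def)
  qed
  have "0 \<le> a" "a < int p" using p1 unfolding a_def by auto
  then have aU: "a \<in> {1..<int p}" using a0 by auto
  have psix: "\<psi> x = (\<psi> 0 + (a * x) mod int p) mod int p" if "x \<in> U" for x
  proof -
    define n where "n = nat ((a * x) mod int p)"
    have nn: "int n = (a * x) mod int p" unfolding n_def using p1 by simp
    have "[int n * m = x] (mod int p)"
    proof -
      have "[int n * m = a * x * m] (mod int p)" unfolding nn cong_def by (simp add: mod_mult_left_eq)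
      also have "a * x * m = x * (a * m)" by (simp add: algebra_simps)
      also have "[x * (a * m) = x * 1] (mod int p)" by (rule cong_scalar_left[OF am])
      finally show ?thesis by simp
    qed
    then have "(0 + int n * m) mod int p = x" using that by (simp add: cong_def)
    moreover have "(0::int) \<in> U" using p1 by simp
    ultimately have "\<psi> x = (\<psi> 0 + int n) mod int p" using iter by metis
    then show ?thesis using nn by simp
  qed
  have anti: "cay_adj p S u v \<longleftrightarrow> \<not> cay_adj p S (\<psi> u) (\<psi> v)" if "u \<in> U" "v \<in> U" "u \<noteq> v" for u v
  proof -
    have "cay_adj p S (\<psi> u) (\<psi> v) = cay_adj p S (F u) (F v)"
      unfolding \<psi>_def using Aut_adj[OF g(1) F_in[OF that(1)] F_in[OF that(2)]] by simp
    then show ?thesis using Fanti[OF that] by simp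
  qed
  have "\<forall>x\<in>{1..<int p}. x \<in> S \<longleftrightarrow> (a * x) mod int p \<notin> S"
  proof
    fix x assume x: "x \<in> {1..<int p}"
    have xU: "x \<in> U" "x \<noteq> 0" using x by auto
    have zU: "(0::int) \<in> U" using p1 by simp
    have "cay_adj p S x 0 \<longleftrightarrow> x \<in> S" using x unfolding cay_adj_def by simp
    moreover have "cay_adj p S (\<psi> x) (\<psi> 0) \<longleftrightarrow> (a * x) mod int p \<in> S"
    proof -
      have "(\<psi> x - \<psi> 0) mod int p = (a * x) mod int p"
        unfolding psix[OF xU(1)] by (simp add: mod_simps)
      then show ?thesis unfolding cay_adj_def by simp
    qed
    ultimately show "x \<in> S \<longleftrightarrow> (a * x) mod int p \<notin> S" using anti[OF xU(1) zU xU(2)] by simp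
  qed
  then show ?thesis using aU by blast
qed

end

lemma multiplier:
  assumes p: "prime p" and S: "cayley_conn_set p S" and sc: "self_complementary p S"
  shows "\<exists>a\<in>{1..<int p}. \<forall>x\<in>{1..<int p}. x \<in> S \<longleftrightarrow> (a * x) mod int p \<notin> S"
proof -
  obtain f where bij: "bij_betw f {0..<int p} {0..<int p}"
    and iso: "\<And>u v. u \<in> {0..<int p} \<Longrightarrow> v \<in> {0..<int p} \<Longrightarrow> u \<noteq> v \<Longrightarrow>
        (cay_adj p S u v \<longleftrightarrow> (f u \<noteq> f v \<and> \<not> cay_adj p S (f u) (f v)))"
    using sc unfolding self_complementary_def by blast
  define F where "F = (\<lambda>x. if x \<in> {0..<int p} then f x else x)"
  have "bij_betw F {0..<int p} {0..<int p}"
    using bij unfolding F_def by (rule bij_betw_cong[THEN iffD1, rotated]) simp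
  then have Fp: "F permutes {0..<int p}" by (rule bij_imp_permutes) (auto simp: F_def)
  have inj: "inj_on f {0..<int p}" using bij bij_betw_def by blast
  have Fa: "cay_adj p S u v \<longleftrightarrow> \<not> cay_adj p S (F u) (F v)"
    if "u \<in> {0..<int p}" "v \<in> {0..<int p}" "u \<noteq> v" for u v
  proof -
    have "f u \<noteq> f v" using inj that inj_on_contraD by metis
    then show ?thesis using iso[OF that] that unfolding F_def by simp
  qed
  interpret turner p S F by (unfold_locales) (use p S Fp Fa in auto)
  show ?thesis by (rule multiplier_loc)
qed

lemma Sbar_bound:
  assumes p: "prime p" and S: "cayley_conn_set p S" and sc: "self_complementary p S"
  shows "2 * card ({1..<int p} - S) \<le> p - 1"
proof -
  have p1: "p > 1" using prime_gt_1_nat[OF p] .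
  have SU: "S \<subseteq> {1..<int p}" using S unfolding cayley_conn_set_def by blast
  obtain f where bij: "bij_betw f {0..<int p} {0..<int p}"
    and iso: "\<And>u v. u \<in> {0..<int p} \<Longrightarrow> v \<in> {0..<int p} \<Longrightarrow> u \<noteq> v \<Longrightarrow>
        (cay_adj p S u v \<longleftrightarrow> (f u \<noteq> f v \<and> \<not> cay_adj p S (f u) (f v)))"
    using sc unfolding self_complementary_def by blast
  have inj: "inj_on f {0..<int p}" using bij bij_betw_def by blast
  have fr: "f u \<in> {0..<int p}" if "u \<in> {0..<int p}" for u
    using bij that bij_betwE by blast
  define Sb where "Sb = {1..<int p} - S"
  define g where "g = (\<lambda>v. (f v - f 0) mod int p)"
  have gS: "g v \<in> S" if v: "v \<in> Sb" for v
  proof -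
    have vU: "v \<in> {0..<int p}" "v \<noteq> 0" using v unfolding Sb_def by auto
    have 0: "(0::int) \<in> {0..<int p}" using p1 by simp
    have "\<not> cay_adj p S v 0" using v vU unfolding Sb_def cay_adj_def by auto
    moreover have "f v \<noteq> f 0" using inj vU 0 inj_on_contraD by metis
    ultimately have "cay_adj p S (f v) (f 0)" using iso[OF vU(1) 0 vU(2)] by blast
    then show ?thesis unfolding g_def cay_adj_def .
  qed
  have ginj: "inj_on g Sb"
  proof (rule inj_onI)
    fix v w assume v: "v \<in> Sb" and w: "w \<in> Sb" and e: "g v = g w"
    have vU: "v \<in> {0..<int p}" and wU: "w \<in> {0..<int p}" using v w unfolding Sb_def by auto
    have "[f v - f 0 = f w - f 0] (mod int p)" using e unfolding g_def cong_def .
    then have "[f v = f w] (mod int p)" by (simp add: cong_diff_iff_cong_0 cong_iff_dvd_diff)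
    then have "f v = f w" using fr[OF vU] fr[OF wU] by (metis atLeastLessThan_iff cong_def mod_pos_pos_trivial)
    then show "v = w" using inj vU wU inj_on_contraD by metis
  qed
  have "card Sb \<le> card S"
    using card_inj_on_le[OF ginj] gS finite_subset[OF SU] by (meson finite_atLeastLessThan_int image_subsetI)
  moreover have "card Sb = card {1..<int p} - card S"
    unfolding Sb_def by (rule card_Diff_subset) (use SU finite_subset in auto)
  moreover have "card {1..<int p} = p - 1" by simp
  moreover have "card S \<le> p - 1" using card_mono[OF _ SU] by simp
  ultimately show ?thesis unfolding Sb_def by linarith
qed

definition vec2 :: "int \<Rightarrow> nat \<Rightarrow> int \<Rightarrow> nat \<Rightarrow> int" where
  "vec2 a p c = (\<lambda>i. if i = 0 then c else if i = Suc 0 then (a * c) mod int p else 0)"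

lemma lower_subspace:
  assumes p: "prime p" and S: "cayley_conn_set p S"
    and a: "a \<in> {1..<int p}" and am: "\<forall>x\<in>{1..<int p}. x \<in> S \<longleftrightarrow> (a * x) mod int p \<notin> S"
  defines "V \<equiv> vec2 a p ` {0..<int p}"
  shows "lin_subspace p 2 V" "strong_indep p S 2 V" "card V = p"
proof -
  have p1: "int p > 1" using prime_gt_1_nat[OF p] by simp
  have SU: "S \<subseteq> {1..<int p}" using S unfolding cayley_conn_set_def by blast
  have inF: "vec2 a p c \<in> Fvecs p 2" if "c \<in> {0..<int p}" for c
    using that p1 unfolding vec2_def Fvecs_def by auto
  have z: "vec2 a p 0 = (\<lambda>i. 0)" unfolding vec2_def by auto
  have addc: "(\<lambda>i. (vec2 a p c i + vec2 a p d i) mod int p) = vec2 a p ((c + d) mod int p)"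
    if "c \<in> {0..<int p}" "d \<in> {0..<int p}" for c d
    unfolding vec2_def by (auto simp: fun_eq_iff mod_simps algebra_simps)
  have smc: "(\<lambda>i. (e * vec2 a p c i) mod int p) = vec2 a p ((e * c) mod int p)" for e c
    unfolding vec2_def by (auto simp: fun_eq_iff mod_simps algebra_simps)
  show "lin_subspace p 2 V"
    unfolding lin_subspace_def V_def
  proof (intro conjI ballI)
    show "vec2 a p ` {0..<int p} \<subseteq> Fvecs p 2" using inF by auto
    have "(0::int) \<in> {0..<int p}" using p1 by simp
    then show "(\<lambda>i. 0) \<in> vec2 a p ` {0..<int p}" using z by (metis image_eqI)
  next
    fix u v assume "u \<in> vec2 a p ` {0..<int p}" "v \<in> vec2 a p ` {0..<int p}"
    then obtain c d where cd: "c \<in> {0..<int p}" "d \<in> {0..<int p}" "u = vec2 a p c" "v = vec2 a p d"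
      by blast
    have "(c + d) mod int p \<in> {0..<int p}" using p1 by simp
    then show "(\<lambda>i. (u i + v i) mod int p) \<in> vec2 a p ` {0..<int p}"
      using addc[OF cd(1,2)] cd by auto
  next
    fix e u assume "e \<in> {0..<int p}" "u \<in> vec2 a p ` {0..<int p}"
    then obtain c where c: "c \<in> {0..<int p}" "u = vec2 a p c" by blast
    have "(e * c) mod int p \<in> {0..<int p}" using p1 by simp
    then show "(\<lambda>i. (e * u i) mod int p) \<in> vec2 a p ` {0..<int p}" using smc c by auto
  qed
  show "strong_indep p S 2 V"
    unfolding strong_indep_def
  proof (intro conjI ballI)
    show "V \<subseteq> Fvecs p 2" using inF V_def by auto
  next
    fix u v assume "u \<in> V" "v \<in> V"
    then obtain c d where cd: "c \<in> {0..<int p}" "d \<in> {0..<int p}" "u = vec2 a p c" "v = vec2 a p d"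
      unfolding V_def by blast
    show "\<not> strong_adj p S 2 u v"
    proof (cases "c = d")
      case True then show ?thesis using cd unfolding strong_adj_def by simp
    next
      case False
      define x where "x = (c - d) mod int p"
      have x: "x \<in> {1..<int p}"
      proof -
        have "x \<noteq> 0"
        proof
          assume "x = 0"
          then have "[c = d] (mod int p)" unfolding x_def by (simp add: cong_iff_dvd_diff dvd_eq_mod_eq_0)
          then show False using cd False by (metis atLeastLessThan_iff cong_def mod_pos_pos_trivial)
        qed
        moreover have "0 \<le> x" "x < int p" using p1 unfolding x_def by auto
        ultimately show ?thesis by auto
      qed
      show ?thesis
      proof (cases "x \<in> S")
        case True
        then have nS: "(a * x) mod int p \<notin> S" using am x by blast
        have e1: "((a * c) mod int p - (a * d) mod int p) mod int p = (a * x) mod int p"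
          unfolding x_def by (simp add: mod_simps right_diff_distrib)
        have "(a * x) mod int p \<noteq> 0"
        proof
          assume "(a * x) mod int p = 0"
          then have "int p dvd a * x" by (simp add: dvd_eq_mod_eq_0)
          moreover have "prime (int p)" using p by simp
          ultimately have "int p dvd a \<or> int p dvd x" using prime_dvd_mult_iff by blast
          then show False using a x zdvd_imp_le by fastforce
        qed
        then have ne: "(a * c) mod int p \<noteq> (a * d) mod int p" using e1 by auto
        have "\<not> cay_adj p S ((a * c) mod int p) ((a * d) mod int p)"
          unfolding cay_adj_def using e1 nS by simp
        then show ?thesis using ne cd unfolding strong_adj_def vec2_def
          by (metis One_nat_def less_2_cases_iff n_not_Suc_n)
      next
        case False
        then have "\<not> cay_adj p S c d" unfolding cay_adj_def x_def by simp
        then show ?thesis using \<open>c \<noteq> d\<close> cd unfolding strong_adj_def vec2_def by force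
      qed
    qed
  qed
  have "inj_on (vec2 a p) {0..<int p}"
  proof (rule inj_onI)
    fix c d assume "vec2 a p c = vec2 a p d"
    then have "vec2 a p c 0 = vec2 a p d 0" by simp
    then show "c = d" unfolding vec2_def by simp
  qed
  then show "card V = p" unfolding V_def by (simp add: card_image)
qed

lemma cards_finite:
  assumes "prime p"
  shows "finite {card V | V. lin_subspace p k V \<and> strong_indep p S k V}"
proof -
  have "{card V | V. lin_subspace p k V \<and> strong_indep p S k V} \<subseteq> {..card (Fvecs p k)}"
    using card_mono[OF Fvecs_finite] unfolding lin_subspace_def by auto
  then show ?thesis using finite_subset by blast
qed

lemma zero_subspace:
  assumes "prime p"
  shows "lin_subspace p k {\<lambda>i. 0}" "strong_indep p S k {\<lambda>i. 0}"
proof -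
  have p1: "int p > 1" using prime_gt_1_nat[OF assms] by simp
  have "(\<lambda>i. 0) \<in> Fvecs p k" using p1 unfolding Fvecs_def by auto
  then show "lin_subspace p k {\<lambda>i. 0}" "strong_indep p S k {\<lambda>i. 0}"
    unfolding lin_subspace_def strong_indep_def strong_adj_def by auto
qed

lemma alpha_attained:
  assumes "prime p"
  shows "\<exists>V. lin_subspace p k V \<and> strong_indep p S k V \<and> card V = alpha_lin p S k"
proof -
  let ?C = "{card V | V. lin_subspace p k V \<and> strong_indep p S k V}"
  have "?C \<noteq> {}" using zero_subspace[OF assms] by blast
  then have "Max ?C \<in> ?C" using cards_finite[OF assms] Max_in by blast
  then show ?thesis unfolding alpha_lin_def by auto
qed

lemma alpha_ge:
  assumes "prime p" "lin_subspace p k V" "strong_indep p S k V"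
  shows "card V \<le> alpha_lin p S k"
  unfolding alpha_lin_def using assms cards_finite[OF assms(1)] by (intro Max_ge) auto

theorem mainTheorem6:
  fixes p :: nat and S :: "int set"
  assumes "prime p"
    and "cayley_conn_set p S"
    and "self_complementary p S"
  shows "theta_lin p S = sqrt (real p)"
proof -
  note p = assms(1) and S = assms(2) and sc = assms(3)
  have p1: "p > 1" using prime_gt_1_nat[OF p] .
  define f where "f = (\<lambda>k. real (alpha_lin p S k) powr (1 / real k))"
  have sq1: "1 \<le> sqrt (real p)" using p1 by simp
  have up: "f k \<le> sqrt (real p)" if "k \<in> {1..}" for k
  proof -
    have k: "k \<ge> 1" using that by simp
    obtain V where V: "lin_subspace p k V" "strong_indep p S k V" "card V = alpha_lin p S k"
      using alpha_attained[OF p] by blast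
    obtain d where d: "card V = p^d" "2 * d \<le> k"
      using indep_upper[OF p S Sbar_bound[OF p S sc] V(1,2)] by blast
    have "real (alpha_lin p S k) = sqrt (real p) ^ (2 * d)"
      using V(3) d(1) by (simp add: power_mult)
    also have "\<dots> \<le> sqrt (real p) ^ k" by (rule power_increasing[OF d(2) sq1])
    finally have le: "real (alpha_lin p S k) \<le> sqrt (real p) ^ k" .
    have "f k \<le> (sqrt (real p) ^ k) powr (1 / real k)"
      unfolding f_def by (rule powr_mono2) (use le in auto)
    also have "sqrt (real p) ^ k = sqrt (real p) powr (real k)"
      using sq1 by (simp add: powr_realpow)
    also have "(sqrt (real p) powr (real k)) powr (1 / real k) = sqrt (real p)"
      using k sq1 by (simp add: powr_powr powr_one)
    finally show ?thesis .
  qed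
  obtain a where a: "a \<in> {1..<int p}" "\<forall>x\<in>{1..<int p}. x \<in> S \<longleftrightarrow> (a * x) mod int p \<notin> S"
    using multiplier[OF p S sc] by blast
  have "p \<le> alpha_lin p S 2"
    using alpha_ge[OF p lower_subspace(1,2)[OF p S a]] lower_subspace(3)[OF p S a] by simp
  then have "real p powr (1/2) \<le> real (alpha_lin p S 2) powr (1/2)"
    by (intro powr_mono2) auto
  then have low: "sqrt (real p) \<le> f 2" unfolding f_def by (simp add: powr_half_sqrt)
  have bdd: "bdd_above (f ` {1..})" using up by (intro bdd_aboveI2) auto
  have "theta_lin p S = (SUP k\<in>{1..}. f k)" unfolding theta_lin_def f_def ..
  also have "\<dots> = sqrt (real p)"
  proof (rule antisym)
    show "(SUP k\<in>{1..}. f k) \<le> sqrt (real p)" by (rule cSUP_least) (use up in auto)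
    show "sqrt (real p) \<le> (SUP k\<in>{1..}. f k)" by (rule cSUP_upper2[OF bdd, of 2]) (use low in auto)
  qed
  finally show ?thesis .
qed

end
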